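(* Let $n\ge2$, $l\ge1$, $\mathfrak g=D^{(2)}_{n+1}$, $B$ the level-$l$ perfect crystal of the context, $\lambda=l\Lambda_0$, $d=2n$, and $i^{(j)}_a=a-1$ for $1\le a\le n+1$, $i^{(j)}_a=2n+1-a$ for $n+2\le a\le 2n$ (all $j\ge1$). Then: (II) $B^{(j)}_d=B$ for all $j\ge1$; (III) $\langle\lambda_j,h_{i^{(j)}_a}\rangle\le\varepsilon_{i^{(j)}_a}(b)$ for all $j\ge1$, $1\le a\le d$, $b\in B^{(j)}_{a-1}$; (IV') for all $j\ge1$, $a=1,\dots,d$: $\varepsilon_{i^{(j)}_{a+1}}(b^{(j)}_a)=0$, $\varphi_{i^{(j)}_{a+1}}(b^{(j)}_a)>0$ (with $i^{(j)}_{d+1}:=i^{(j+1)}_1$), and $b^{(j+1)}_0=\tilde f_{i^{(j+1)}_1}^mb^{(j)}_d$ with $m=\langle\lambda_{j+1},h_{i^{(j+1)}_1}\rangle$. Moreover $B^{(j)}_0=\{(0,\dots,0)\}$, $B^{(j)}_{2n}=B$; for $1\le a\le n$, $B^{(j)}_a$ is the set of $b\in B$ with all coordinates $0$ except possibly $x_1,\dots,x_a$; for $1\le a\le n-1$, $B^{(j)}_{n+a}$ is the set of $b\in B$ with all coordinates $0$ except possibly $x_1,\dots,x_n,x_0,\bar x_n,\dots,\bar x_{n-a+1}$. Also $b^{(j)}_0=(0,\dots,0)$, and for $1\le a\le n$, $b^{(j)}_a$ has $x_a=l$ and $b^{(j)}_{n+a}$ has $\bar x_{n-a+1}=l$, all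 other coordinates $0$.
   Context: $(x)_+=\max(x,0)$. $B=\{(x_1,\dots,x_n,x_0,\bar x_n,\dots,\bar x_1)\in\mathbb Z^{2n}\times\{0,1\}: x_0\in\{0,1\},\ x_i,\bar x_i\ge0,\ \sum_{i=1}^n(x_i+\bar x_i)\le l\}$. Crystal structure: $\tilde f_0b=(x_1+1,x_2,\dots,\bar x_1)$ if $x_1\ge\bar x_1$, $(x_1,\dots,\bar x_2,\bar x_1-1)$ if $x_1<\bar x_1$; for $1\le i\le n-1$, $\tilde f_ib$ replaces $(x_i,x_{i+1})$ by $(x_i-1,x_{i+1}+1)$ if $x_{i+1}\ge\bar x_{i+1}$, and $(\bar x_{i+1},\bar x_i)$ by $(\bar x_{i+1}-1,\bar x_i+1)$ if $x_{i+1}<\bar x_{i+1}$; $\tilde f_nb$ replaces $(x_n,x_0)$ by $(x_n-1,x_0+1)$ if $x_0=0$, and $(x_0,\bar x_n)$ by $(x_0-1,\bar x_n+1)$ if $x_0=1$; $\tilde e_ib=b'$ iff $\tilde f_ib'=b$; results outside $B$ mean $0$. With $s(b)=\sum_{i=1}^n(x_i+\bar x_i)$: $\varphi_0(b)=l-x_0-s(b)+2(\bar x_1-x_1)_+$, $\varepsilon_0(b)=l-x_0-s(b)+2(x_1-\bar x_1)_+$; $\varphi_i(b)=x_i+(\bar x_{i+1}-x_{i+1})_+$, $\varepsilon_i(b)=\bar x_i+(x_{i+1}-\bar x_{i+1})_+$ ($1\le i\le n-1$); $\varphi_n(b)=2x_n+x_0$, $\varepsilon_n(b)=2\bar x_n+x_0$.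 For $\lambda=l\Lambda_0$: $\lambda_j=l\Lambda_0$ and $\overline b_j=(0,\dots,0)$ for all $j$; $\langle\lambda_j,h_i\rangle$ is the coefficient of $\Lambda_i$ in $\lambda_j$. Given $d$, $i^{(j)}_a$: $B^{(j)}_0=\{\overline b_j\}$, $B^{(j)}_a=\bigcup_{n\ge0}\tilde f_{i^{(j)}_a}^nB^{(j)}_{a-1}\setminus\{0\}$; $b^{(j)}_0=\overline b_j$, $b^{(j)}_a=\tilde f_{i^{(j)}_a}^{\varphi_{i^{(j)}_a}(b^{(j)}_{a-1})}b^{(j)}_{a-1}$. *)

theory Defs
  imports Main
begin

text \<open>Elements of the crystal B for D^(2)_{n+1}: a triple (xs, x0, xbs) where
  xs = [x_1,...,x_n] (so x_k = xs ! (k-1)), x0 is x_0, and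
  xbs = [xbar_1,...,xbar_n] (so xbar_k = xbs ! (k-1)).
  Integers are used so that "falling outside B" can be detected; the zero
  element of the crystal (result 0 of Kashiwara operators) is modelled by None.\<close>

type_synonym crys = "int list \<times> int \<times> int list"

definition xc :: "crys \<Rightarrow> nat \<Rightarrow> int" where
  "xc b k = (case b of (xs, x0, xbs) \<Rightarrow> xs ! (k - 1))"

definition xbc :: "crys \<Rightarrow> nat \<Rightarrow> int" where
  "xbc b k = (case b of (xs, x0, xbs) \<Rightarrow> xbs ! (k - 1))"

definition x0c :: "crys \<Rightarrow> int" where
  "x0c b = fst (snd b)"

definition ssum :: "crys \<Rightarrow> int" where
  "ssum b = (case b of (xs, x0, xbs) \<Rightarrow> sum_list xs + sum_list xbs)"

definition crystalB :: "nat \<Rightarrow> nat \<Rightarrow> crys set" where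
  "crystalB n l = {(xs, x0, xbs). length xs = n \<and> length xbs = n \<and> x0 \<in> {0, 1}
      \<and> (\<forall>v\<in>set xs. 0 \<le> v) \<and> (\<forall>v\<in>set xbs. 0 \<le> v)
      \<and> x0 + sum_list xs + sum_list xbs \<le> int l}"

definition posp :: "int \<Rightarrow> int" where
  "posp x = max x 0"

definition fraw :: "nat \<Rightarrow> nat \<Rightarrow> crys \<Rightarrow> crys" where
  "fraw n i b = (case b of (xs, x0, xbs) \<Rightarrow>
     if i = 0 then
       (if xs ! 0 \<ge> xbs ! 0 then (xs[0 := xs ! 0 + 1], x0, xbs)
        else (xs, x0, xbs[0 := xbs ! 0 - 1]))
     else if i < n then
       (if xs ! i \<ge> xbs ! i
        then (xs[i - 1 := xs ! (i - 1) - 1, i := xs ! i + 1], x0, xbs)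
        else (xs, x0, xbs[i := xbs ! i - 1, i - 1 := xbs ! (i - 1) + 1]))
     else
       (if x0 = 0 then (xs[n - 1 := xs ! (n - 1) - 1], x0 + 1, xbs)
        else (xs, x0 - 1, xbs[n - 1 := xbs ! (n - 1) + 1])))"

definition ftil :: "nat \<Rightarrow> nat \<Rightarrow> nat \<Rightarrow> crys \<Rightarrow> crys option" where
  "ftil n l i b = (if i \<le> n \<and> b \<in> crystalB n l \<and> fraw n i b \<in> crystalB n l
                    then Some (fraw n i b) else None)"

fun fpow :: "nat \<Rightarrow> nat \<Rightarrow> nat \<Rightarrow> nat \<Rightarrow> crys \<Rightarrow> crys option" where
  "fpow n l i 0 b = Some b"
| "fpow n l i (Suc k) b = Option.bind (fpow n l i k b) (ftil n l i)"

definition phi :: "nat \<Rightarrow> nat \<Rightarrow> nat \<Rightarrow> crys \<Rightarrow> int" where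
  "phi n l i b =
    (if i = 0 then int l - x0c b - ssum b + 2 * posp (xbc b 1 - xc b 1)
     else if i < n then xc b i + posp (xbc b (i + 1) - xc b (i + 1))
     else if i = n then 2 * xc b n + x0c b
     else 0)"

definition eps :: "nat \<Rightarrow> nat \<Rightarrow> nat \<Rightarrow> crys \<Rightarrow> int" where
  "eps n l i b =
    (if i = 0 then int l - x0c b - ssum b + 2 * posp (xc b 1 - xbc b 1)
     else if i < n then xbc b i + posp (xc b (i + 1) - xbc b (i + 1))
     else if i = n then 2 * xbc b n + x0c b
     else 0)"

text \<open>lambda_j = l Lambda_0 for all j, so <lambda_j, h_i> = l if i = 0, else 0.\<close>
definition lamh :: "nat \<Rightarrow> nat \<Rightarrow> nat \<Rightarrow> nat" where
  "lamh l j i = (if i = 0 then l else 0)"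

definition zeroB :: "nat \<Rightarrow> crys" where
  "zeroB n = (replicate n 0, 0, replicate n 0)"

fun Bset :: "nat \<Rightarrow> nat \<Rightarrow> (nat \<Rightarrow> nat \<Rightarrow> nat) \<Rightarrow> nat \<Rightarrow> nat \<Rightarrow> crys set" where
  "Bset n l idx j 0 = {zeroB n}"
| "Bset n l idx j (Suc a) =
     {b. \<exists>b'\<in>Bset n l idx j a. \<exists>k. fpow n l (idx j (Suc a)) k b' = Some b}"

fun bseq :: "nat \<Rightarrow> nat \<Rightarrow> (nat \<Rightarrow> nat \<Rightarrow> nat) \<Rightarrow> nat \<Rightarrow> nat \<Rightarrow> crys option" where
  "bseq n l idx j 0 = Some (zeroB n)"
| "bseq n l idx j (Suc a) =
     Option.bind (bseq n l idx j a)
       (\<lambda>b. fpow n l (idx j (Suc a)) (nat (phi n l (idx j (Suc a)) b)) b)"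

end

theory Submission
  imports Defs
begin


lemma sum_upd: "k < length xs \<Longrightarrow> sum_list (xs[k := (x::int)]) = sum_list xs + x - xs ! k"
  by (induction xs arbitrary: k) (auto split: nat.split)

lemma fpow_Suc': "fpow n l i (Suc k) b = Option.bind (ftil n l i b) (fpow n l i k)"
proof (induction k arbitrary: b)
  case 0 then show ?case by (cases "ftil n l i b") auto
next
  case (Suc k)
  show ?case
    apply (subst fpow.simps(2))
    apply (subst Suc)
    by (cases "ftil n l i b") auto
qed

lemma fpow_add: "fpow n l i (k + m) b = Option.bind (fpow n l i k b) (fpow n l i m)"
proof (induction k arbitrary: b)
  case 0 then show ?case by simp
next
  case (Suc k)
  show ?case by (simp only: add_Suc fpow_Suc') (cases "ftil n l i b", simp_all add: Suc.IH)
qed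

lemma memB: "((xs, x0, xbs) \<in> crystalB n l) = (length xs = n \<and> length xbs = n \<and> x0 \<in> {0, 1}
      \<and> (\<forall>v\<in>set xs. 0 \<le> v) \<and> (\<forall>v\<in>set xbs. 0 \<le> v)
      \<and> x0 + sum_list xs + sum_list xbs \<le> int l)"
  by (simp add: crystalB_def)

lemma all_set_nth: "(\<forall>v\<in>set xs. P v) = (\<forall>k<length xs. P (xs ! k))"
  by (metis in_set_conv_nth)

lemma set_upd_nonneg: "\<forall>v\<in>set xs. (0::int) \<le> v \<Longrightarrow> 0 \<le> x \<Longrightarrow> \<forall>v\<in>set (xs[k := x]). 0 \<le> v"
  using set_update_subset_insert by fastforce

lemma step0a:
  assumes "(xs, x0, xbs) \<in> crystalB n l" "n \<ge> 1" "xs ! 0 \<ge> xbs ! 0" "x0 + sum_list xs + sum_list xbs < int l"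
  shows "ftil n l 0 (xs, x0, xbs) = Some (xs[0 := xs ! 0 + 1], x0, xbs)"
proof -
  have nn: "xs ! 0 \<ge> 0" using assms unfolding memB by (auto simp: all_set_nth)
  have "(xs[0 := xs ! 0 + 1], x0, xbs) \<in> crystalB n l"
    using assms nn unfolding memB
    by (auto simp: sum_upd dest!: set_update_subset_insert[THEN subsetD]; insert nn; linarith)
  then show ?thesis using assms by (simp add: ftil_def fraw_def)
qed

lemma step0b:
  assumes "(xs, x0, xbs) \<in> crystalB n l" "n \<ge> 1" "xs ! 0 < xbs ! 0"
  shows "ftil n l 0 (xs, x0, xbs) = Some (xs, x0, xbs[0 := xbs ! 0 - 1])"
proof -
  have nn: "xs ! 0 \<ge> 0" using assms unfolding memB by (auto simp: all_set_nth)
  have "(xs, x0, xbs[0 := xbs ! 0 - 1]) \<in> crystalB n l"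
    using assms nn unfolding memB
    by (auto simp: sum_upd dest!: set_update_subset_insert[THEN subsetD]; insert nn; linarith)
  then show ?thesis using assms by (simp add: ftil_def fraw_def)
qed

lemma step1a:
  assumes "(xs, x0, xbs) \<in> crystalB n l" "0 < i" "i < n" "xs ! i \<ge> xbs ! i" "xs ! (i - 1) > 0"
  shows "ftil n l i (xs, x0, xbs) = Some (xs[i - 1 := xs ! (i - 1) - 1, i := xs ! i + 1], x0, xbs)"
proof -
  have nn: "xs ! i \<ge> 0" using assms unfolding memB by (auto simp: all_set_nth)
  have "(xs[i - 1 := xs ! (i - 1) - 1, i := xs ! i + 1], x0, xbs) \<in> crystalB n l"
    using assms nn unfolding memB
    by (auto simp: sum_upd nth_list_update dest!: set_update_subset_insert[THEN subsetD]; insert nn; linarith)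
  then show ?thesis using assms by (simp add: ftil_def fraw_def)
qed

lemma step1b:
  assumes "(xs, x0, xbs) \<in> crystalB n l" "0 < i" "i < n" "xs ! i < xbs ! i"
  shows "ftil n l i (xs, x0, xbs) = Some (xs, x0, xbs[i := xbs ! i - 1, i - 1 := xbs ! (i - 1) + 1])"
proof -
  have nn: "xs ! i \<ge> 0" "xbs ! (i - 1) \<ge> 0" using assms unfolding memB by (auto simp: all_set_nth)
  have "(xs, x0, xbs[i := xbs ! i - 1, i - 1 := xbs ! (i - 1) + 1]) \<in> crystalB n l"
    using assms nn unfolding memB
    by (auto simp: sum_upd nth_list_update dest!: set_update_subset_insert[THEN subsetD]; insert nn; linarith)
  then show ?thesis using assms by (simp add: ftil_def fraw_def)
qed

lemma stepna:
  assumes "(xs, 0, xbs) \<in> crystalB n l" "n \<ge> 1" "xs ! (n - 1) > 0"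
  shows "ftil n l n (xs, 0, xbs) = Some (xs[n - 1 := xs ! (n - 1) - 1], 1, xbs)"
proof -
  have "(xs[n - 1 := xs ! (n - 1) - 1], 1, xbs) \<in> crystalB n l"
    using assms unfolding memB
    by (auto simp: sum_upd dest!: set_update_subset_insert[THEN subsetD])
  then show ?thesis using assms by (simp add: ftil_def fraw_def)
qed

lemma stepnb:
  assumes "(xs, 1, xbs) \<in> crystalB n l" "n \<ge> 1"
  shows "ftil n l n (xs, 1, xbs) = Some (xs, 0, xbs[n - 1 := xbs ! (n - 1) + 1])"
proof -
  have nn: "xbs ! (n - 1) \<ge> 0" using assms unfolding memB by (auto simp: all_set_nth)
  have "(xs, 0, xbs[n - 1 := xbs ! (n - 1) + 1]) \<in> crystalB n l"
    using assms nn unfolding memB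
    by (auto simp: sum_upd dest!: set_update_subset_insert[THEN subsetD]; insert nn; linarith)
  then show ?thesis using assms by (simp add: ftil_def fraw_def)
qed

lemma ftil_mem: "ftil n l i b = Some b' \<Longrightarrow> b' \<in> crystalB n l"
  by (simp add: ftil_def split: if_splits)

lemma fpow_mem: "fpow n l i k b = Some b' \<Longrightarrow> b \<in> crystalB n l \<Longrightarrow> b' \<in> crystalB n l"
proof (induction k arbitrary: b')
  case 0 then show ?case by simp
next
  case (Suc k)
  then show ?case by (cases "fpow n l i k b") (auto intro: ftil_mem)
qed

lemma iter0a:
  "(xs, x0, xbs) \<in> crystalB n l \<Longrightarrow> n \<ge> 1 \<Longrightarrow> xs ! 0 \<ge> xbs ! 0 \<Longrightarrow>
   x0 + sum_list xs + sum_list xbs + int k \<le> int l \<Longrightarrow>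
   fpow n l 0 k (xs, x0, xbs) = Some (xs[0 := xs ! 0 + int k], x0, xbs)"
proof (induction k arbitrary: xs)
  case 0 then show ?case by simp
next
  case (Suc k)
  have s: "ftil n l 0 (xs, x0, xbs) = Some (xs[0 := xs ! 0 + 1], x0, xbs)"
    using Suc.prems by (intro step0a) auto
  have m: "(xs[0 := xs ! 0 + 1], x0, xbs) \<in> crystalB n l" using ftil_mem[OF s] .
  have len: "length xs = n" using Suc.prems unfolding memB by auto
  have "fpow n l 0 k (xs[0 := xs ! 0 + 1], x0, xbs) = Some (xs[0 := xs ! 0 + 1 + int k], x0, xbs)"
    using Suc.IH[OF m] Suc.prems len by (simp add: sum_upd)
  then show ?case by (simp only: fpow_Suc' s) (simp add: algebra_simps)
qed

lemma iter0b:
  "(xs, x0, xbs) \<in> crystalB n l \<Longrightarrow> n \<ge> 1 \<Longrightarrow> xs ! 0 + int k \<le> xbs ! 0 \<Longrightarrow>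
   fpow n l 0 k (xs, x0, xbs) = Some (xs, x0, xbs[0 := xbs ! 0 - int k])"
proof (induction k arbitrary: xbs)
  case 0 then show ?case by simp
next
  case (Suc k)
  have s: "ftil n l 0 (xs, x0, xbs) = Some (xs, x0, xbs[0 := xbs ! 0 - 1])"
    using Suc.prems by (intro step0b) auto
  have m: "(xs, x0, xbs[0 := xbs ! 0 - 1]) \<in> crystalB n l" using ftil_mem[OF s] .
  have len: "length xbs = n" using Suc.prems unfolding memB by auto
  have "fpow n l 0 k (xs, x0, xbs[0 := xbs ! 0 - 1]) = Some (xs, x0, xbs[0 := xbs ! 0 - 1 - int k])"
    using Suc.IH[OF m] Suc.prems len by simp
  then show ?case by (simp only: fpow_Suc' s) (simp add: algebra_simps)
qed

lemma iter1a:
  "(xs, x0, xbs) \<in> crystalB n l \<Longrightarrow> 0 < i \<Longrightarrow> i < n \<Longrightarrow> xs ! i \<ge> xbs ! i \<Longrightarrow>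
   int k \<le> xs ! (i - 1) \<Longrightarrow>
   fpow n l i k (xs, x0, xbs) = Some (xs[i - 1 := xs ! (i - 1) - int k, i := xs ! i + int k], x0, xbs)"
proof (induction k arbitrary: xs)
  case 0 then show ?case by simp
next
  case (Suc k)
  have s: "ftil n l i (xs, x0, xbs) = Some (xs[i - 1 := xs ! (i - 1) - 1, i := xs ! i + 1], x0, xbs)"
    using Suc.prems by (intro step1a) auto
  have m: "(xs[i - 1 := xs ! (i - 1) - 1, i := xs ! i + 1], x0, xbs) \<in> crystalB n l" using ftil_mem[OF s] .
  have len: "length xs = n" using Suc.prems unfolding memB by auto
  have "fpow n l i k (xs[i - 1 := xs ! (i - 1) - 1, i := xs ! i + 1], x0, xbs) =
     Some (xs[i - 1 := xs ! (i - 1) - 1 - int k, i := xs ! i + 1 + int k], x0, xbs)"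
    using Suc.IH[OF m] Suc.prems len by (simp add: nth_list_update list_update_swap)
  then show ?case by (simp only: fpow_Suc' s) (simp add: algebra_simps)
qed

lemma iter1b:
  "(xs, x0, xbs) \<in> crystalB n l \<Longrightarrow> 0 < i \<Longrightarrow> i < n \<Longrightarrow> xs ! i + int k \<le> xbs ! i \<Longrightarrow>
   fpow n l i k (xs, x0, xbs) = Some (xs, x0, xbs[i := xbs ! i - int k, i - 1 := xbs ! (i - 1) + int k])"
proof (induction k arbitrary: xbs)
  case 0 then show ?case by simp
next
  case (Suc k)
  have s: "ftil n l i (xs, x0, xbs) = Some (xs, x0, xbs[i := xbs ! i - 1, i - 1 := xbs ! (i - 1) + 1])"
    using Suc.prems by (intro step1b) auto
  have m: "(xs, x0, xbs[i := xbs ! i - 1, i - 1 := xbs ! (i - 1) + 1]) \<in> crystalB n l" using ftil_mem[OF s] .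
  have len: "length xbs = n" using Suc.prems unfolding memB by auto
  have "fpow n l i k (xs, x0, xbs[i := xbs ! i - 1, i - 1 := xbs ! (i - 1) + 1]) =
     Some (xs, x0, xbs[i := xbs ! i - 1 - int k, i - 1 := xbs ! (i - 1) + 1 + int k])"
    using Suc.IH[OF m] Suc.prems len by (simp add: nth_list_update list_update_swap)
  then show ?case by (simp only: fpow_Suc' s) (simp add: algebra_simps)
qed

lemma itern:
  "(xs, 0, xbs) \<in> crystalB n l \<Longrightarrow> n \<ge> 1 \<Longrightarrow> int k \<le> xs ! (n - 1) \<Longrightarrow>
   fpow n l n (2 * k) (xs, 0, xbs) = Some (xs[n - 1 := xs ! (n - 1) - int k], 0, xbs[n - 1 := xbs ! (n - 1) + int k])"
proof (induction k arbitrary: xs xbs)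
  case 0 then show ?case by simp
next
  case (Suc k)
  have s1: "ftil n l n (xs, 0, xbs) = Some (xs[n - 1 := xs ! (n - 1) - 1], 1, xbs)"
    using Suc.prems by (intro stepna) auto
  have m1: "(xs[n - 1 := xs ! (n - 1) - 1], 1, xbs) \<in> crystalB n l" using ftil_mem[OF s1] .
  have s2: "ftil n l n (xs[n - 1 := xs ! (n - 1) - 1], 1, xbs) = Some (xs[n - 1 := xs ! (n - 1) - 1], 0, xbs[n - 1 := xbs ! (n - 1) + 1])"
    using m1 Suc.prems by (intro stepnb) auto
  have m2: "(xs[n - 1 := xs ! (n - 1) - 1], 0, xbs[n - 1 := xbs ! (n - 1) + 1]) \<in> crystalB n l" using ftil_mem[OF s2] .
  have len: "length xs = n" "length xbs = n" using Suc.prems unfolding memB by auto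
  have "fpow n l n (2 * k) (xs[n - 1 := xs ! (n - 1) - 1], 0, xbs[n - 1 := xbs ! (n - 1) + 1]) =
     Some (xs[n - 1 := xs ! (n - 1) - 1 - int k], 0, xbs[n - 1 := xbs ! (n - 1) + 1 + int k])"
    using Suc.IH[OF m2] Suc.prems len by simp
  moreover have "2 * Suc k = Suc (Suc (2 * k))" by simp
  then have "fpow n l n (2 * Suc k) (xs, 0, xbs) = fpow n l n (2 * k) (xs[n - 1 := xs ! (n - 1) - 1], 0, xbs[n - 1 := xbs ! (n - 1) + 1])"
    by (simp only: fpow_Suc' s1 s2 bind.simps)
  ultimately show ?case by (simp del: fpow.simps add: algebra_simps)
qed

lemma itern_odd:
  "(xs, 0, xbs) \<in> crystalB n l \<Longrightarrow> n \<ge> 1 \<Longrightarrow> int k < xs ! (n - 1) \<Longrightarrow>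
   fpow n l n (2 * k + 1) (xs, 0, xbs) = Some (xs[n - 1 := xs ! (n - 1) - int k - 1], 1, xbs[n - 1 := xbs ! (n - 1) + int k])"
proof -
  assume a: "(xs, 0, xbs) \<in> crystalB n l" "n \<ge> 1" "int k < xs ! (n - 1)"
  have e: "fpow n l n (2 * k) (xs, 0, xbs) = Some (xs[n - 1 := xs ! (n - 1) - int k], 0, xbs[n - 1 := xbs ! (n - 1) + int k])"
    using a by (intro itern) auto
  have m: "(xs[n - 1 := xs ! (n - 1) - int k], 0, xbs[n - 1 := xbs ! (n - 1) + int k]) \<in> crystalB n l"
    using fpow_mem[OF e a(1)] .
  have len: "length xs = n" using a unfolding memB by auto
  have s: "ftil n l n (xs[n - 1 := xs ! (n - 1) - int k], 0, xbs[n - 1 := xbs ! (n - 1) + int k]) =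
      Some (xs[n - 1 := xs ! (n - 1) - int k - 1], 1, xbs[n - 1 := xbs ! (n - 1) + int k])"
    using stepna[OF m] a len by simp
  show ?thesis using e s by simp
qed

definition PA :: "nat \<Rightarrow> nat \<Rightarrow> nat \<Rightarrow> crys set" where
  "PA n l a = {(xs, x0, xbs). (xs, x0, xbs) \<in> crystalB n l \<and> x0 = 0 \<and> (\<forall>k<n. xbs ! k = 0)
      \<and> (\<forall>k. a \<le> k \<and> k < n \<longrightarrow> xs ! k = 0)}"

definition PB :: "nat \<Rightarrow> nat \<Rightarrow> nat \<Rightarrow> crys set" where
  "PB n l c = {(xs, x0, xbs). (xs, x0, xbs) \<in> crystalB n l \<and> (\<forall>k<c. xbs ! k = 0)}"

lemma Bset_sub:
  assumes "idx j (Suc a) = i" "Bset n l idx j a \<subseteq> Q" "Q \<subseteq> crystalB n l"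
    "\<And>b b'. b \<in> Q \<Longrightarrow> ftil n l i b = Some b' \<Longrightarrow> b' \<in> Q"
  shows "Bset n l idx j (Suc a) \<subseteq> Q"
proof
  fix b assume "b \<in> Bset n l idx j (Suc a)"
  then obtain b0 k where b0: "b0 \<in> Bset n l idx j a" "fpow n l i k b0 = Some b" using assms(1) by auto
  have "\<And>b. fpow n l i k b0 = Some b \<Longrightarrow> b \<in> Q"
  proof (induction k)
    case 0 then show ?case using b0 assms(2) by auto
  next
    case (Suc k)
    then show ?case using assms(4) by (cases "fpow n l i k b0") auto
  qed
  then show "b \<in> Q" using b0 by blast
qed

lemma closeA0: "n \<ge> 1 \<Longrightarrow> b \<in> PA n l 1 \<Longrightarrow> ftil n l 0 b = Some b' \<Longrightarrow> b' \<in> PA n l 1"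
  using ftil_mem[of n l 0 b b']
  by (cases b) (auto simp: PA_def ftil_def fraw_def nth_list_update memB all_set_nth split: if_splits; metis One_nat_def less_eq_Suc_le)

lemma closeA: "0 < a \<Longrightarrow> a < n \<Longrightarrow> b \<in> PA n l (Suc a) \<Longrightarrow> ftil n l a b = Some b' \<Longrightarrow> b' \<in> PA n l (Suc a)"
  using ftil_mem[of n l a b b']
  by (cases b) (auto simp: PA_def ftil_def fraw_def nth_list_update memB all_set_nth split: if_splits)

lemma closeBn: "b \<in> PB n l (n - 1) \<Longrightarrow> ftil n l n b = Some b' \<Longrightarrow> b' \<in> PB n l (n - 1)"
  using ftil_mem[of n l n b b']
  by (cases b) (auto simp: PB_def ftil_def fraw_def nth_list_update split: if_splits)

lemma closeB: "0 < i \<Longrightarrow> i < n \<Longrightarrow> b \<in> PB n l (i - 1) \<Longrightarrow> ftil n l i b = Some b' \<Longrightarrow> b' \<in> PB n l (i - 1)"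
  using ftil_mem[of n l i b b']
  by (cases b) (auto simp: PB_def ftil_def fraw_def nth_list_update split: if_splits)

lemma nth_le_sum: "\<forall>v\<in>set xs. 0 \<le> (v::int) \<Longrightarrow> k < length xs \<Longrightarrow> xs ! k \<le> sum_list xs"
proof (induction xs arbitrary: k)
  case Nil then show ?case by simp
next
  case (Cons a xs)
  have "0 \<le> sum_list xs" using Cons.prems by (auto intro: sum_list_nonneg)
  moreover have "0 \<le> a" using Cons.prems by auto
  ultimately show ?case using Cons
  proof (cases k)
    case (Suc m)
    then have "xs ! m \<le> sum_list xs" using Cons by auto
    then show ?thesis using Suc \<open>0 \<le> a\<close> by simp
  qed auto
qed

lemma zeroB_mem: "zeroB n \<in> crystalB n l"
  by (simp add: zeroB_def memB sum_list_replicate)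

lemma W1:
  assumes "n \<ge> 1" "idx j 1 = 0"
  shows "PA n l 1 \<subseteq> Bset n l idx j 1"
proof
  fix b assume b: "b \<in> PA n l 1"
  obtain xs x0 xbs where be: "b = (xs, x0, xbs)" by (cases b)
  have mem: "(xs, x0, xbs) \<in> crystalB n l" and x0: "x0 = 0" and xb: "\<forall>k<n. xbs ! k = 0"
    and xz: "\<forall>k. 1 \<le> k \<and> k < n \<longrightarrow> xs ! k = 0"
    using b be by (auto simp: PA_def)
  have len: "length xs = n" "length xbs = n" using mem by (auto simp: memB)
  have nn: "\<forall>v\<in>set xs. 0 \<le> v" "\<forall>v\<in>set xbs. 0 \<le> v" using mem by (auto simp: memB)
  have x0nn: "xs ! 0 \<ge> 0" using nn len assms(1) by (auto simp: all_set_nth)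
  have sb: "sum_list xbs \<ge> 0" using nn by (auto intro: sum_list_nonneg)
  have "xs ! 0 \<le> sum_list xs" using nth_le_sum[OF nn(1)] len assms(1) by auto
  then have le: "xs ! 0 \<le> int l" using mem x0 sb by (auto simp: memB)
  have "fpow n l 0 (nat (xs ! 0)) (replicate n 0, 0, replicate n 0) = Some ((replicate n 0)[0 := (replicate n 0) ! 0 + int (nat (xs ! 0))], 0, replicate n 0)"
    using zeroB_mem[of n l] assms(1) le x0nn
    by (intro iter0a) (auto simp: zeroB_def sum_list_replicate)
  then have "fpow n l 0 (nat (xs ! 0)) (zeroB n) = Some ((replicate n 0)[0 := 0 + int (nat (xs ! 0))], 0, replicate n 0)"
    using assms(1) by (simp add: zeroB_def)
  moreover have "(replicate n 0)[0 := 0 + int (nat (xs ! 0))] = xs"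
    using len xz x0nn by (intro nth_equalityI) (auto simp: nth_list_update)
  moreover have "replicate n 0 = xbs" using len xb by (intro nth_equalityI) auto
  ultimately have "fpow n l 0 (nat (xs ! 0)) (zeroB n) = Some b" using be x0 by simp
  then show "b \<in> Bset n l idx j 1" using assms(2) by (auto intro!: bexI[of _ "zeroB n"])
qed

lemma W2:
  assumes "0 < a" "a < n" "idx j (Suc a) = a" "PA n l a \<subseteq> Bset n l idx j a"
  shows "PA n l (Suc a) \<subseteq> Bset n l idx j (Suc a)"
proof
  fix b assume b: "b \<in> PA n l (Suc a)"
  obtain xs x0 xbs where be: "b = (xs, x0, xbs)" by (cases b)
  have mem: "(xs, x0, xbs) \<in> crystalB n l" and x0: "x0 = 0" and xb: "\<forall>k<n. xbs ! k = 0"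
    and xz: "\<forall>k. Suc a \<le> k \<and> k < n \<longrightarrow> xs ! k = 0"
    using b be by (auto simp: PA_def)
  have len: "length xs = n" "length xbs = n" using mem by (auto simp: memB)
  have nn: "\<forall>k<n. 0 \<le> xs ! k" "\<forall>k<n. 0 \<le> xbs ! k" using mem len by (auto simp: memB all_set_nth)
  define m where "m = xs ! a"
  define xs1 where "xs1 = xs[a - 1 := xs ! (a - 1) + m, a := 0]"
  have s1: "sum_list xs1 = sum_list xs"
    unfolding xs1_def m_def using assms len by (simp add: sum_upd nth_list_update)
  have mem1: "(xs1, 0, xbs) \<in> crystalB n l"
    using mem s1 nn len assms unfolding memB all_set_nth xs1_def m_def x0
    by (auto simp: nth_list_update)
  have inPA: "(xs1, 0, xbs) \<in> PA n l a"
    using mem1 xb xz len assms unfolding PA_def xs1_def by (auto simp: nth_list_update)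
  have "fpow n l a (nat m) (xs1, 0, xbs) = Some (xs1[a - 1 := xs1 ! (a - 1) - int (nat m), a := xs1 ! a + int (nat m)], 0, xbs)"
    using mem1 assms xb len nn unfolding xs1_def m_def
    by (intro iter1a) (auto simp: nth_list_update)
  moreover have "xs1[a - 1 := xs1 ! (a - 1) - int (nat m), a := xs1 ! a + int (nat m)] = xs"
    using len nn assms unfolding xs1_def m_def
    by (intro nth_equalityI) (auto simp: nth_list_update)
  ultimately have "fpow n l a (nat m) (xs1, 0, xbs) = Some b" using be x0 by simp
  then show "b \<in> Bset n l idx j (Suc a)" using assms inPA by auto
qed

lemma W3:
  assumes "1 \<le> n" "idx j (Suc n) = n" "PA n l n \<subseteq> Bset n l idx j n"
  shows "PB n l (n - 1) \<subseteq> Bset n l idx j (Suc n)"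
proof
  fix b assume b: "b \<in> PB n l (n - 1)"
  obtain xs x0 xbs where be: "b = (xs, x0, xbs)" by (cases b)
  have mem: "(xs, x0, xbs) \<in> crystalB n l" and xb: "\<forall>k<n - 1. xbs ! k = 0"
    using b be by (auto simp: PB_def)
  have len: "length xs = n" "length xbs = n" and x0: "x0 = 0 \<or> x0 = 1" using mem by (auto simp: memB)
  have nn: "\<forall>k<n. 0 \<le> xs ! k" "\<forall>k<n. 0 \<le> xbs ! k" using mem len by (auto simp: memB all_set_nth)
  define t where "t = xbs ! (n - 1)"
  define xs1 where "xs1 = xs[n - 1 := xs ! (n - 1) + x0 + t]"
  define xbs1 where "xbs1 = xbs[n - 1 := 0]"
  have s1: "sum_list xs1 = sum_list xs + x0 + t" "sum_list xbs1 = sum_list xbs - t"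
    unfolding xs1_def xbs1_def t_def using assms len by (simp_all add: sum_upd)
  have mem1: "(xs1, 0, xbs1) \<in> crystalB n l"
    using mem s1 nn len assms x0 unfolding memB all_set_nth xs1_def xbs1_def t_def
    by (auto simp: nth_list_update)
  have inPA: "(xs1, 0, xbs1) \<in> PA n l n"
    using mem1 xb len assms unfolding PA_def xbs1_def
    by (auto simp: nth_list_update)
  have tnn: "t \<ge> 0" using nn assms unfolding t_def by auto
  have xn: "xs ! (n - 1) \<ge> 0" using nn assms by auto
  have eqx: "xs1[n - 1 := xs1 ! (n - 1) - int (nat t) - x0] = xs"
    using len assms tnn unfolding xs1_def by (intro nth_equalityI) (auto simp: nth_list_update)
  have eqb: "xbs1[n - 1 := xbs1 ! (n - 1) + int (nat t)] = xbs"
    using len assms tnn unfolding xbs1_def t_def by (intro nth_equalityI) (auto simp: nth_list_update)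
  have "\<exists>k. fpow n l n k (xs1, 0, xbs1) = Some b"
  proof (cases "x0 = 0")
    case True
    have "fpow n l n (2 * nat t) (xs1, 0, xbs1) = Some (xs1[n - 1 := xs1 ! (n - 1) - int (nat t)], 0, xbs1[n - 1 := xbs1 ! (n - 1) + int (nat t)])"
      using mem1 assms tnn xn True len unfolding xs1_def by (intro itern) (auto simp: nth_list_update)
    then show ?thesis using eqx eqb True be by auto
  next
    case False
    then have x1: "x0 = 1" using x0 by auto
    have "fpow n l n (2 * nat t + 1) (xs1, 0, xbs1) = Some (xs1[n - 1 := xs1 ! (n - 1) - int (nat t) - 1], 1, xbs1[n - 1 := xbs1 ! (n - 1) + int (nat t)])"
      using mem1 assms tnn xn x1 len unfolding xs1_def by (intro itern_odd) (auto simp: nth_list_update)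
    moreover have "(xs1[n - 1 := xs1 ! (n - 1) - int (nat t) - 1], 1, xbs1[n - 1 := xbs1 ! (n - 1) + int (nat t)]) = b"
      using eqx eqb x1 be by simp
    ultimately show ?thesis by metis
  qed
  then show "b \<in> Bset n l idx j (Suc n)" using assms inPA by auto
qed

lemma W4:
  assumes "0 < i" "i < n" "idx j (Suc m) = i" "PB n l i \<subseteq> Bset n l idx j m"
  shows "PB n l (i - 1) \<subseteq> Bset n l idx j (Suc m)"
proof
  fix b assume b: "b \<in> PB n l (i - 1)"
  obtain xs x0 xbs where be: "b = (xs, x0, xbs)" by (cases b)
  have mem: "(xs, x0, xbs) \<in> crystalB n l" and xb: "\<forall>k<i - 1. xbs ! k = 0"
    using b be by (auto simp: PB_def)
  have len: "length xs = n" "length xbs = n" using mem by (auto simp: memB)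
  have nn: "\<forall>k<n. 0 \<le> xs ! k" "\<forall>k<n. 0 \<le> xbs ! k" using mem len by (auto simp: memB all_set_nth)
  define t where "t = xbs ! (i - 1)"
  define p where "p = xs ! i - xbs ! i"
  define q where "q = max p 0"
  define xs1 where "xs1 = xs[i - 1 := xs ! (i - 1) + q, i := xs ! i - q]"
  define xbs1 where "xbs1 = xbs[i := xbs ! i + t, i - 1 := 0]"
  have tnn: "t \<ge> 0" "q \<ge> 0" using nn assms unfolding t_def q_def by auto
  have s1: "sum_list xs1 = sum_list xs" "sum_list xbs1 = sum_list xbs"
    unfolding xs1_def xbs1_def t_def using assms len by (simp_all add: sum_upd nth_list_update)
  have mem1: "(xs1, x0, xbs1) \<in> crystalB n l"
    using mem s1 nn len assms tnn unfolding memB all_set_nth xs1_def xbs1_def q_def p_def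
    by (auto simp: nth_list_update)
  have inPB: "(xs1, x0, xbs1) \<in> PB n l i"
    using mem1 xb len assms unfolding PB_def xbs1_def
    by (auto simp: nth_list_update)
  have st1: "fpow n l i (nat t) (xs1, x0, xbs1) = Some (xs1, x0, xbs1[i := xbs1 ! i - int (nat t), i - 1 := xbs1 ! (i - 1) + int (nat t)])"
    using mem1 assms tnn len unfolding xs1_def xbs1_def q_def p_def by (intro iter1b) (auto simp: nth_list_update)
  have eqb: "xbs1[i := xbs1 ! i - int (nat t), i - 1 := xbs1 ! (i - 1) + int (nat t)] = xbs"
    using len assms tnn unfolding xbs1_def t_def by (intro nth_equalityI) (auto simp: nth_list_update)
  have st1': "fpow n l i (nat t) (xs1, x0, xbs1) = Some (xs1, x0, xbs)" using st1 eqb by simp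
  have "\<exists>k. fpow n l i k (xs1, x0, xbs1) = Some b"
  proof (cases "p > 0")
    case False
    then have "xs1 = xs" using len assms unfolding xs1_def q_def by simp
    then show ?thesis using st1' be by auto
  next
    case True
    have mem2: "(xs1, x0, xbs) \<in> crystalB n l" using fpow_mem[OF st1' mem1] .
    have "fpow n l i (nat p) (xs1, x0, xbs) = Some (xs1[i - 1 := xs1 ! (i - 1) - int (nat p), i := xs1 ! i + int (nat p)], x0, xbs)"
      using mem2 assms True nn len unfolding xs1_def q_def p_def by (intro iter1a) (auto simp: nth_list_update)
    moreover have "xs1[i - 1 := xs1 ! (i - 1) - int (nat p), i := xs1 ! i + int (nat p)] = xs"
      using len assms True unfolding xs1_def q_def by (intro nth_equalityI) (auto simp: nth_list_update)
    ultimately have "fpow n l i (nat t + nat p) (xs1, x0, xbs1) = Some b"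
      using st1' be by (simp add: fpow_add del: fpow.simps)
    then show ?thesis by blast
  qed
  then show "b \<in> Bset n l idx j (Suc m)" using assms inPB by auto
qed



definition IDX :: "nat \<Rightarrow> nat \<Rightarrow> nat \<Rightarrow> nat" where
  "IDX n = (\<lambda>j a. if a \<le> n + 1 then a - 1 else 2 * n + 1 - a)"

lemma PA_sub: "PA n l a \<subseteq> crystalB n l" by (auto simp: PA_def)
lemma PB_sub: "PB n l c \<subseteq> crystalB n l" by (auto simp: PB_def)

lemma BA: "1 \<le> a \<Longrightarrow> n \<ge> 2 \<Longrightarrow> a \<le> n \<Longrightarrow> Bset n l (IDX n) j a = PA n l a"
proof (induction a rule: nat_induct_at_least)
  case base
  have z: "zeroB n \<in> PA n l 1" using zeroB_mem[of n l] by (auto simp: PA_def zeroB_def)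
  have "Bset n l (IDX n) j (Suc 0) \<subseteq> PA n l 1"
  proof (rule Bset_sub[where i=0])
    show "IDX n j (Suc 0) = 0" by (simp add: IDX_def)
    show "Bset n l (IDX n) j 0 \<subseteq> PA n l 1" using z by simp
    show "PA n l 1 \<subseteq> crystalB n l" by (rule PA_sub)
    show "\<And>b b'. b \<in> PA n l 1 \<Longrightarrow> ftil n l 0 b = Some b' \<Longrightarrow> b' \<in> PA n l 1"
      using closeA0[of n] base by auto
  qed
  moreover have "PA n l 1 \<subseteq> Bset n l (IDX n) j 1"
    by (rule W1) (use base in \<open>simp_all add: IDX_def\<close>)
  ultimately show ?case by simp
next
  case (Suc a)
  then have IH: "Bset n l (IDX n) j a = PA n l a" by simp
  have "Bset n l (IDX n) j (Suc a) \<subseteq> PA n l (Suc a)"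
  proof (rule Bset_sub[where i=a])
    show "IDX n j (Suc a) = a" using Suc by (simp add: IDX_def)
    show "Bset n l (IDX n) j a \<subseteq> PA n l (Suc a)" unfolding IH by (auto simp: PA_def)
    show "PA n l (Suc a) \<subseteq> crystalB n l" by (rule PA_sub)
    show "\<And>b b'. b \<in> PA n l (Suc a) \<Longrightarrow> ftil n l a b = Some b' \<Longrightarrow> b' \<in> PA n l (Suc a)"
      using closeA[of a n] Suc by auto
  qed
  moreover have "PA n l (Suc a) \<subseteq> Bset n l (IDX n) j (Suc a)"
    by (rule W2) (use IH Suc in \<open>simp_all add: IDX_def\<close>)
  ultimately show ?case by simp
qed

lemma BB: "1 \<le> a \<Longrightarrow> n \<ge> 2 \<Longrightarrow> a \<le> n \<Longrightarrow> Bset n l (IDX n) j (n + a) = PB n l (n - a)"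
proof (induction a rule: nat_induct_at_least)
  case base
  have IH: "Bset n l (IDX n) j n = PA n l n" using BA[of n n l j] base by simp
  have "Bset n l (IDX n) j (Suc n) \<subseteq> PB n l (n - 1)"
  proof (rule Bset_sub[where i=n])
    show "IDX n j (Suc n) = n" by (simp add: IDX_def)
    show "Bset n l (IDX n) j n \<subseteq> PB n l (n - 1)" unfolding IH by (auto simp: PA_def PB_def)
    show "PB n l (n - 1) \<subseteq> crystalB n l" by (rule PB_sub)
    show "\<And>b b'. b \<in> PB n l (n - 1) \<Longrightarrow> ftil n l n b = Some b' \<Longrightarrow> b' \<in> PB n l (n - 1)"
      using closeBn by blast
  qed
  moreover have "PB n l (n - 1) \<subseteq> Bset n l (IDX n) j (Suc n)"
    by (rule W3) (use IH base in \<open>simp_all add: IDX_def\<close>)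
  ultimately show ?case by simp
next
  case (Suc a)
  then have IH: "Bset n l (IDX n) j (n + a) = PB n l (n - a)" by simp
  have i: "IDX n j (Suc (n + a)) = n - a" using Suc by (simp add: IDX_def)
  have "Bset n l (IDX n) j (Suc (n + a)) \<subseteq> PB n l (n - a - 1)"
  proof (rule Bset_sub[where i="n - a"])
    show "IDX n j (Suc (n + a)) = n - a" by (rule i)
    show "Bset n l (IDX n) j (n + a) \<subseteq> PB n l (n - a - 1)" unfolding IH by (auto simp: PB_def)
    show "PB n l (n - a - 1) \<subseteq> crystalB n l" by (rule PB_sub)
    show "\<And>b b'. b \<in> PB n l (n - a - 1) \<Longrightarrow> ftil n l (n - a) b = Some b' \<Longrightarrow> b' \<in> PB n l (n - a - 1)"
      using closeB[of "n - a" n] Suc by auto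
  qed
  moreover have "PB n l (n - a - 1) \<subseteq> Bset n l (IDX n) j (Suc (n + a))"
  proof -
    have "PB n l (n - a - 1) \<subseteq> Bset n l (IDX n) j (Suc (n + a))"
      by (rule W4[where i="n - a"]) (use IH Suc i in simp_all)
    then show ?thesis .
  qed
  ultimately show ?case by (metis diff_Suc_eq_diff_pred diff_commute subset_antisym add_Suc_right)
qed

definition EA :: "nat \<Rightarrow> nat \<Rightarrow> nat \<Rightarrow> crys" where
  "EA n l a = ((replicate n 0)[a - 1 := int l], 0, replicate n 0)"
definition EB :: "nat \<Rightarrow> nat \<Rightarrow> nat \<Rightarrow> crys" where
  "EB n l a = (replicate n 0, 0, (replicate n 0)[n - a := int l])"

lemma sum_rep_upd: "k < n \<Longrightarrow> sum_list ((replicate n (0::int))[k := v]) = v"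
  by (simp add: sum_upd sum_list_replicate)

lemma rep_upd0: "(replicate n (0::int))[k := 0] = replicate n 0"
  by (metis list_update_beyond list_update_id not_le_imp_less nth_replicate length_replicate)

lemma EA_mem: "1 \<le> a \<Longrightarrow> a \<le> n \<Longrightarrow> EA n l a \<in> crystalB n l"
  unfolding EA_def memB all_set_nth
  by (auto simp: sum_rep_upd sum_list_replicate nth_list_update)

lemma EB_mem: "1 \<le> a \<Longrightarrow> a \<le> n \<Longrightarrow> EB n l a \<in> crystalB n l"
  unfolding EB_def memB all_set_nth
  by (auto simp: sum_rep_upd sum_list_replicate nth_list_update)

lemma bseqA: "1 \<le> a \<Longrightarrow> n \<ge> 2 \<Longrightarrow> a \<le> n \<Longrightarrow> bseq n l (IDX n) j a = Some (EA n l a)"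
proof (induction a rule: nat_induct_at_least)
  case base
  have ph: "phi n l 0 (zeroB n) = int l"
    using base by (simp add: phi_def x0c_def ssum_def xc_def xbc_def zeroB_def sum_list_replicate posp_def)
  have "fpow n l 0 l (replicate n 0, 0, replicate n 0) = Some ((replicate n 0)[0 := (replicate n 0) ! 0 + int l], 0, replicate n 0)"
    using zeroB_mem[of n l] base by (intro iter0a) (auto simp: zeroB_def sum_list_replicate)
  then have "fpow n l 0 l (zeroB n) = Some (EA n l 1)"
    using base by (simp add: zeroB_def EA_def)
  then show ?case using ph by (simp add: IDX_def del: fpow.simps)
next
  case (Suc a)
  then have IH: "bseq n l (IDX n) j a = Some (EA n l a)" by simp
  have ph: "phi n l a (EA n l a) = int l"
    using Suc by (simp add: phi_def xc_def xbc_def EA_def posp_def nth_list_update)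
  have "fpow n l a l (EA n l a) = Some (((replicate n 0)[a - 1 := int l])[a - 1 := ((replicate n 0)[a - 1 := int l]) ! (a - 1) - int l,
      a := ((replicate n 0)[a - 1 := int l]) ! a + int l], 0, replicate n 0)"
    unfolding EA_def using EA_mem[of a n l] Suc
    by (intro iter1a) (auto simp: EA_def nth_list_update)
  moreover have "((replicate n 0)[a - 1 := int l])[a - 1 := ((replicate n 0)[a - 1 := int l]) ! (a - 1) - int l,
      a := ((replicate n 0)[a - 1 := int l]) ! a + int l] = (replicate n 0)[Suc a - 1 := int l]"
    using Suc by (intro nth_equalityI) (auto simp: nth_list_update)
  ultimately have "fpow n l a l (EA n l a) = Some (EA n l (Suc a))" by (simp add: EA_def del: fpow.simps)
  moreover have "IDX n j (Suc a) = a" using Suc by (simp add: IDX_def)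
  ultimately show ?case using IH ph by (simp del: fpow.simps)
qed

lemma bseqB: "1 \<le> a \<Longrightarrow> n \<ge> 2 \<Longrightarrow> a \<le> n \<Longrightarrow> bseq n l (IDX n) j (n + a) = Some (EB n l a)"
proof (induction a rule: nat_induct_at_least)
  case base
  have IH: "bseq n l (IDX n) j n = Some (EA n l n)" using bseqA[of n n l j] base by simp
  have ph: "phi n l n (EA n l n) = 2 * int l"
    using base by (simp add: phi_def xc_def x0c_def EA_def)
  have "fpow n l n (2 * l) ((replicate n 0)[n - 1 := int l], 0, replicate n 0) =
     Some (((replicate n 0)[n - 1 := int l])[n - 1 := ((replicate n 0)[n - 1 := int l]) ! (n - 1) - int l], 0,
           (replicate n 0)[n - 1 := (replicate n 0) ! (n - 1) + int l])"
    using EA_mem[of n n l] base by (intro itern) (auto simp: EA_def)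
  then have "fpow n l n (2 * l) (EA n l n) = Some (EB n l 1)"
    using base by (simp add: EA_def EB_def rep_upd0 del: fpow.simps)
  moreover have "nat (2 * int l) = 2 * l" by simp
  ultimately show ?case using IH ph by (simp add: IDX_def del: fpow.simps)
next
  case (Suc a)
  then have IH: "bseq n l (IDX n) j (n + a) = Some (EB n l a)" by simp
  have ph: "phi n l (n - a) (EB n l a) = int l"
    using Suc by (simp add: phi_def xc_def xbc_def EB_def posp_def nth_list_update)
  have "fpow n l (n - a) l (EB n l a) = Some (replicate n 0, 0, ((replicate n 0)[n - a := int l])[n - a := ((replicate n 0)[n - a := int l]) ! (n - a) - int l,
      n - a - 1 := ((replicate n 0)[n - a := int l]) ! (n - a - 1) + int l])"
    unfolding EB_def using EB_mem[of a n l] Suc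
    by (intro iter1b) (auto simp: EB_def nth_list_update)
  moreover have "((replicate n 0)[n - a := int l])[n - a := ((replicate n 0)[n - a := int l]) ! (n - a) - int l,
      n - a - 1 := ((replicate n 0)[n - a := int l]) ! (n - a - 1) + int l] = (replicate n 0)[n - Suc a := int l]"
    using Suc by (intro nth_equalityI) (auto simp: nth_list_update)
  ultimately have "fpow n l (n - a) l (EB n l a) = Some (EB n l (Suc a))" by (simp add: EB_def del: fpow.simps)
  moreover have "IDX n j (Suc (n + a)) = n - a" using Suc by (simp add: IDX_def)
  ultimately show ?case using IH ph by (simp del: fpow.simps)
qed

lemma sh1: "(\<forall>k\<in>{1..n}. P (k - 1)) = (\<forall>k<(n::nat). P k)"
proof
  assume h: "\<forall>k\<in>{1..n}. P (k - 1)"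
  show "\<forall>k<n. P k"
  proof (intro allI impI)
    fix k assume "k < n" then have "Suc k \<in> {1..n}" by auto
    then show "P k" using h by fastforce
  qed
next
  assume h: "\<forall>k<n. P k"
  show "\<forall>k\<in>{1..n}. P (k - 1)" using h by auto
qed

lemma sh2: "(\<forall>k\<in>{a<..n}. P (k - 1)) = (\<forall>k. a \<le> k \<and> k < (n::nat) \<longrightarrow> P k)"
proof
  assume h: "\<forall>k\<in>{a<..n}. P (k - 1)"
  show "\<forall>k. a \<le> k \<and> k < n \<longrightarrow> P k"
  proof (intro allI impI)
    fix k assume "a \<le> k \<and> k < n" then have "Suc k \<in> {a<..n}" by auto
    then show "P k" using h by fastforce
  qed
next
  assume h: "\<forall>k. a \<le> k \<and> k < n \<longrightarrow> P k"
  show "\<forall>k\<in>{a<..n}. P (k - 1)"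
  proof
    fix k assume "k \<in> {a<..n}"
    then have "a \<le> k - 1 \<and> k - 1 < n" by auto
    then show "P (k - 1)" using h by blast
  qed
qed

lemma sh3: "(\<forall>k\<in>{1..<c + 1}. P (k - 1)) = (\<forall>k<(c::nat). P k)"
proof
  assume h: "\<forall>k\<in>{1..<c + 1}. P (k - 1)"
  show "\<forall>k<c. P k"
  proof (intro allI impI)
    fix k assume "k < c" then have "Suc k \<in> {1..<c + 1}" by auto
    then show "P k" using h by fastforce
  qed
next
  assume h: "\<forall>k<c. P k"
  show "\<forall>k\<in>{1..<c + 1}. P (k - 1)" using h by auto
qed

lemma PA_conv: "PA n l a = {b \<in> crystalB n l. x0c b = 0 \<and> (\<forall>k\<in>{1..n}. xbc b k = 0) \<and> (\<forall>k\<in>{a<..n}. xc b k = 0)}"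
proof (rule set_eqI)
  fix b :: crys
  obtain xs x0 xbs where be: "b = (xs, x0, xbs)" by (cases b)
  show "b \<in> PA n l a \<longleftrightarrow> b \<in> {b \<in> crystalB n l. x0c b = 0 \<and> (\<forall>k\<in>{1..n}. xbc b k = 0) \<and> (\<forall>k\<in>{a<..n}. xc b k = 0)}"
    using sh1[where P="\<lambda>k. xbs ! k = 0" and n=n] sh2[where P="\<lambda>k. xs ! k = 0" and a=a and n=n]
    by (simp add: be PA_def xc_def xbc_def x0c_def)
qed

lemma PB_conv: "a \<le> n \<Longrightarrow> PB n l (n - a) = {b \<in> crystalB n l. \<forall>k\<in>{1..<n - a + 1}. xbc b k = 0}"
proof (rule set_eqI)
  fix b :: crys
  obtain xs x0 xbs where be: "b = (xs, x0, xbs)" by (cases b)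
  show "b \<in> PB n l (n - a) \<longleftrightarrow> b \<in> {b \<in> crystalB n l. \<forall>k\<in>{1..<n - a + 1}. xbc b k = 0}"
    using sh3[where P="\<lambda>k. xbs ! k = 0" and c="n - a"]
    by (simp add: be PB_def xbc_def)
qed

lemma PB0: "PB n l 0 = crystalB n l" by (auto simp: PB_def)

lemma Bset_in: "n \<ge> 2 \<Longrightarrow> m \<le> 2 * n \<Longrightarrow> Bset n l (IDX n) j m \<subseteq> crystalB n l"
proof (cases "m = 0")
  case True then show ?thesis by (simp add: zeroB_mem)
next
  case False
  assume a: "n \<ge> 2" "m \<le> 2 * n"
  show ?thesis
  proof (cases "m \<le> n")
    case True then show ?thesis using BA[of m n l j] False a PA_sub by simp
  next
    case F: False
    then have "m = n + (m - n)" by simp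
    have "Bset n l (IDX n) j (n + (m - n)) = PB n l (n - (m - n))" by (rule BB) (use F a in auto)
    then have "Bset n l (IDX n) j m = PB n l (n - (m - n))" using \<open>m = n + (m - n)\<close> by simp
    then show ?thesis using PB_sub by simp
  qed
qed

lemma eps_nonneg: "b \<in> crystalB n l \<Longrightarrow> 1 \<le> i \<Longrightarrow> i \<le> n \<Longrightarrow> 0 \<le> eps n l i b"
  by (cases b) (auto simp: eps_def memB all_set_nth xc_def xbc_def x0c_def posp_def)

lemma EA_a: "1 \<le> a \<Longrightarrow> a < n \<Longrightarrow> l \<ge> 1 \<Longrightarrow> eps n l a (EA n l a) = 0 \<and> phi n l a (EA n l a) > 0"
  by (simp add: eps_def phi_def EA_def xc_def xbc_def posp_def nth_list_update)

lemma EA_n: "1 \<le> n \<Longrightarrow> l \<ge> 1 \<Longrightarrow> eps n l n (EA n l n) = 0 \<and> phi n l n (EA n l n) > 0"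
  by (simp add: eps_def phi_def EA_def xc_def xbc_def x0c_def posp_def nth_list_update)

lemma EB_a: "1 \<le> a \<Longrightarrow> a < n \<Longrightarrow> l \<ge> 1 \<Longrightarrow> eps n l (n - a) (EB n l a) = 0 \<and> phi n l (n - a) (EB n l a) > 0"
  by (simp add: eps_def phi_def EB_def xc_def xbc_def posp_def nth_list_update)

lemma EB_n: "1 \<le> n \<Longrightarrow> l \<ge> 1 \<Longrightarrow> eps n l 0 (EB n l n) = 0 \<and> phi n l 0 (EB n l n) > 0"
  by (simp add: eps_def phi_def EB_def xc_def xbc_def x0c_def ssum_def posp_def nth_list_update sum_rep_upd sum_list_replicate)

lemma EB_back: "n \<ge> 1 \<Longrightarrow> fpow n l 0 l (EB n l n) = Some (zeroB n)"
proof -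
  assume n: "n \<ge> 1"
  have "fpow n l 0 l (replicate n 0, 0, (replicate n 0)[0 := int l]) =
     Some (replicate n 0, 0, ((replicate n 0)[0 := int l])[0 := ((replicate n 0)[0 := int l]) ! 0 - int l])"
    using EB_mem[of n n l] n by (intro iter0b) (auto simp: EB_def)
  then show ?thesis using n by (simp add: EB_def zeroB_def rep_upd0 del: fpow.simps)
qed

theorem mainTheorem7:
  fixes n l :: nat and d :: nat and idx :: "nat \<Rightarrow> nat \<Rightarrow> nat"
  assumes "n \<ge> 2" and "l \<ge> 1"
  defines "d \<equiv> 2 * n"
      and "idx \<equiv> (\<lambda>j a. if a \<le> n + 1 then a - 1 else 2 * n + 1 - a)"
  shows
    "(\<forall>j\<ge>1. Bset n l idx j d = crystalB n l)
   \<and> (\<forall>j\<ge>1. \<forall>a\<in>{1..d}. \<forall>b\<in>Bset n l idx j (a - 1).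
        int (lamh l j (idx j a)) \<le> eps n l (idx j a) b)
   \<and> (\<forall>j\<ge>1. \<forall>a\<in>{1..d}.
        (let i' = (if a = d then idx (j + 1) 1 else idx j (a + 1)) in
          \<exists>b. bseq n l idx j a = Some b \<and> eps n l i' b = 0 \<and> phi n l i' b > 0))
   \<and> (\<forall>j\<ge>1. \<exists>b. bseq n l idx j d = Some b \<and>
        fpow n l (idx (j + 1) 1) (lamh l (j + 1) (idx (j + 1) 1)) b = bseq n l idx (j + 1) 0)
   \<and> (\<forall>j\<ge>1. Bset n l idx j 0 = {zeroB n} \<and> Bset n l idx j (2 * n) = crystalB n l)
   \<and> (\<forall>j\<ge>1. \<forall>a\<in>{1..n}. Bset n l idx j a =
        {b \<in> crystalB n l. x0c b = 0 \<and> (\<forall>k\<in>{1..n}. xbc b k = 0)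
                           \<and> (\<forall>k\<in>{a<..n}. xc b k = 0)})
   \<and> (\<forall>j\<ge>1. \<forall>a\<in>{1..n - 1}. Bset n l idx j (n + a) =
        {b \<in> crystalB n l. \<forall>k\<in>{1..<n - a + 1}. xbc b k = 0})
   \<and> (\<forall>j\<ge>1. bseq n l idx j 0 = Some (zeroB n))
   \<and> (\<forall>j\<ge>1. \<forall>a\<in>{1..n}.
        bseq n l idx j a = Some ((replicate n 0)[a - 1 := int l], 0, replicate n 0)
      \<and> bseq n l idx j (n + a) = Some (replicate n 0, 0, (replicate n 0)[n - a := int l]))"
proof -
  have n1: "n \<ge> 1" using assms(1) by simp
  have I: "idx = IDX n" by (simp add: idx_def IDX_def)
  have dd: "d = n + n" by (simp add: d_def)
  have c1: "\<forall>j. Bset n l idx j d = crystalB n l"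
    using BB[of n n l] assms(1) PB0 by (simp add: I dd)
  have c2: "\<forall>j\<ge>1. \<forall>a\<in>{1..d}. \<forall>b\<in>Bset n l idx j (a - 1).
        int (lamh l j (idx j a)) \<le> eps n l (idx j a) b"
  proof (intro allI impI ballI)
    fix j a b assume j: "1 \<le> j" and a: "a \<in> {1..d}" and b: "b \<in> Bset n l idx j (a - 1)"
    show "int (lamh l j (idx j a)) \<le> eps n l (idx j a) b"
    proof (cases "a = 1")
      case True
      then have "b = zeroB n" using b by simp
      moreover have "eps n l 0 (zeroB n) = int l"
        using n1 by (simp add: eps_def x0c_def ssum_def xc_def xbc_def zeroB_def sum_list_replicate posp_def)
      ultimately show ?thesis using True by (simp add: idx_def lamh_def)
    next
      case False
      have i1: "1 \<le> idx j a" "idx j a \<le> n" using False a by (auto simp: idx_def dd)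
      have "a - 1 \<le> 2 * n" using a unfolding d_def by (simp; linarith)
      then have "Bset n l (IDX n) j (a - 1) \<subseteq> crystalB n l" using Bset_in[of n "a - 1" l j] assms(1) by simp
      then have "b \<in> crystalB n l" using b by (auto simp: I)
      then have "0 \<le> eps n l (idx j a) b" using eps_nonneg i1 by blast
      moreover have "lamh l j (idx j a) = 0" using i1 by (simp add: lamh_def)
      ultimately show ?thesis by simp
    qed
  qed
  have c3: "\<forall>j\<ge>1. \<forall>a\<in>{1..d}.
        (let i' = (if a = d then idx (j + 1) 1 else idx j (a + 1)) in
          \<exists>b. bseq n l idx j a = Some b \<and> eps n l i' b = 0 \<and> phi n l i' b > 0)"
  proof (intro allI impI ballI)
    fix j :: nat and a assume j: "1 \<le> j" and a: "a \<in> {1..d}"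
    consider (A) "a < n" | (N) "a = n" | (B) "n < a" "a < d" | (D) "a = d" using a dd by force
    then show "let i' = (if a = d then idx (j + 1) 1 else idx j (a + 1)) in
          \<exists>b. bseq n l idx j a = Some b \<and> eps n l i' b = 0 \<and> phi n l i' b > 0"
    proof cases
      case A
      have "bseq n l idx j a = Some (EA n l a)" using bseqA[of a n l j] A a assms(1) by (simp add: I)
      moreover have "idx j (a + 1) = a" "a \<noteq> d" using A by (auto simp: idx_def dd)
      ultimately show ?thesis using EA_a[of a n l] A a assms(2) by (simp add: Let_def)
    next
      case N
      have "bseq n l idx j a = Some (EA n l n)" using bseqA[of n n l j] N assms(1) by (simp add: I)
      moreover have "idx j (a + 1) = n" "a \<noteq> d" using N assms(1) by (auto simp: idx_def dd)
      ultimately show ?thesis using EA_n[of n l] n1 assms(2) by (simp add: Let_def)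
    next
      case B
      define a' where "a' = a - n"
      have a': "a = n + a'" "1 \<le> a'" "a' < n" using B dd unfolding a'_def by auto
      have "bseq n l idx j a = Some (EB n l a')" using bseqB[of a' n l j] a' assms(1) by (simp add: I)
      moreover have "idx j (a + 1) = n - a'" "a \<noteq> d" using a' B by (auto simp: idx_def dd)
      ultimately show ?thesis using EB_a[of a' n l] a' assms(2) by (simp add: Let_def)
    next
      case D
      have "bseq n l idx j a = Some (EB n l n)" using bseqB[of n n l j] D assms(1) by (simp add: I dd)
      moreover have "idx (j + 1) 1 = 0" by (simp add: idx_def)
      ultimately show ?thesis using EB_n[of n l] D n1 assms(2) by (simp add: Let_def)
    qed
  qed
  have c4: "\<forall>j\<ge>1. \<exists>b. bseq n l idx j d = Some b \<and>
        fpow n l (idx (j + 1) 1) (lamh l (j + 1) (idx (j + 1) 1)) b = bseq n l idx (j + 1) 0"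
  proof (intro allI impI)
    fix j :: nat
    have "bseq n l idx j d = Some (EB n l n)" using bseqB[of n n l j] assms(1) by (simp add: I dd)
    moreover have "idx (j + 1) 1 = 0" by (simp add: idx_def)
    ultimately show "\<exists>b. bseq n l idx j d = Some b \<and>
        fpow n l (idx (j + 1) 1) (lamh l (j + 1) (idx (j + 1) 1)) b = bseq n l idx (j + 1) 0"
      using EB_back[OF n1, of l] by (simp add: lamh_def del: fpow.simps)
  qed
  have c5: "\<forall>j\<ge>1. Bset n l idx j 0 = {zeroB n} \<and> Bset n l idx j (2 * n) = crystalB n l"
    using c1 by (simp add: d_def)
  have c6: "\<forall>j\<ge>1. \<forall>a\<in>{1..n}. Bset n l idx j a =
        {b \<in> crystalB n l. x0c b = 0 \<and> (\<forall>k\<in>{1..n}. xbc b k = 0)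
                           \<and> (\<forall>k\<in>{a<..n}. xc b k = 0)}"
    using BA assms(1) PA_conv by (simp add: I)
  have c7: "\<forall>j\<ge>1. \<forall>a\<in>{1..n - 1}. Bset n l idx j (n + a) =
        {b \<in> crystalB n l. \<forall>k\<in>{1..<n - a + 1}. xbc b k = 0}"
  proof (intro allI impI ballI)
    fix j a assume "1 \<le> (j::nat)" "a \<in> {1..n - 1}"
    then have "1 \<le> a" "a \<le> n" by auto
    then show "Bset n l idx j (n + a) = {b \<in> crystalB n l. \<forall>k\<in>{1..<n - a + 1}. xbc b k = 0}"
      using BB[of a n l j] PB_conv[of a n l] assms(1) by (simp only: I)
  qed
  have c8: "\<forall>j\<ge>1. bseq n l idx j 0 = Some (zeroB n)" by simp
  have c9: "\<forall>j\<ge>1. \<forall>a\<in>{1..n}.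
        bseq n l idx j a = Some ((replicate n 0)[a - 1 := int l], 0, replicate n 0)
      \<and> bseq n l idx j (n + a) = Some (replicate n 0, 0, (replicate n 0)[n - a := int l])"
    using bseqA bseqB assms(1) by (simp add: I EA_def EB_def)
  show ?thesis using c1 c2 c3 c4 c5 c6 c7 c8 c9 by blast
qed

end
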